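(* For every integer $n\ge1$, $$2^n(1+x^2)\hat{A}_n(x)=(1-x)^{n+1}P_n\!\left(\frac{1+x}{1-x}\right),\qquad \hat{B}_n(x)=(1-x)^nQ_n\!\left(\frac{1+x}{1-x}\right).$$
   Context: For $\sigma\in\mathfrak S_n$ (permutations of $[n]$), $i\in[n-1]$ is an alternating descent if either $\sigma(i)>\sigma(i+1)$ and $i$ is odd, or $\sigma(i)<\sigma(i+1)$ and $i$ is even; $\hat A_n(x)=\sum_{\sigma\in\mathfrak S_n}x^{\hat d(\sigma)}$ where $\hat d(\sigma)$ is the number of alternating descents. $\mathcal B_n$ is the set of signed permutations: bijections $\pi$ of $\{\pm1,\dots,\pm n\}$ with $\pi(-i)=-\pi(i)$, written as words $\pi(1)\cdots\pi(n)$ with $\pi(0)=0$. An index $i\in\{0\}\cup[n-1]$ is an alternating descent of $\pi$ if either $\pi(i)<\pi(i+1)$ and $i$ even, or $\pi(i)>\pi(i+1)$ and $i$ odd; $\hat B_n(x)=\sum_{\pi\in\mathcal B_n}x^{\hat d_B(\pi)}$ with $\hat d_B(\pi)$ the number of such indices. $P_n,Q_n$ are Hoffman's derivative polynomials, defined by $\frac{d^n}{dt^n}\tan t=P_n(\tan t)$ and $\frac{d^n}{dt^n}\sec t=Q_n(\tan t)\sec t$; equivalently $P_0(x)=x$, $Q_0(x)=1$, $P_{n+1}(x)=(1+x^2)P_n'(x)$, $Q_{n+1}(x)=xQ_n(x)+(1+x^2)Q_n'(x)$. *)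

theory Defs
  imports "HOL-Combinatorics.Permutations" "HOL-Computational_Algebra.Polynomial"
begin

definition alt_des :: "nat \<Rightarrow> (nat \<Rightarrow> nat) \<Rightarrow> nat" where
  "alt_des n \<sigma> = card {i \<in> {1..<n}. (\<sigma> i > \<sigma> (Suc i) \<and> odd i) \<or> (\<sigma> i < \<sigma> (Suc i) \<and> even i)}"

definition A_hat :: "nat \<Rightarrow> real \<Rightarrow> real" where
  "A_hat n x = (\<Sum>\<sigma> \<in> {\<sigma>. \<sigma> permutes {1..n}}. x ^ alt_des n \<sigma>)"

definition signed_perms :: "nat \<Rightarrow> (int \<Rightarrow> int) set" where
  "signed_perms n = {\<pi>. \<pi> permutes ({- int n..int n} - {0}) \<and> (\<forall>i. \<pi> (- i) = - \<pi> i)}"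

definition alt_des_B :: "nat \<Rightarrow> (int \<Rightarrow> int) \<Rightarrow> nat" where
  "alt_des_B n \<pi> = card {i \<in> {0..<int n}. (\<pi> i < \<pi> (i + 1) \<and> even i) \<or> (\<pi> i > \<pi> (i + 1) \<and> odd i)}"

definition B_hat :: "nat \<Rightarrow> real \<Rightarrow> real" where
  "B_hat n x = (\<Sum>\<pi> \<in> signed_perms n. x ^ alt_des_B n \<pi>)"

fun P_hoff :: "nat \<Rightarrow> real poly" where
  "P_hoff 0 = [:0, 1:]"
| "P_hoff (Suc n) = [:1, 0, 1:] * pderiv (P_hoff n)"

fun Q_hoff :: "nat \<Rightarrow> real poly" where
  "Q_hoff 0 = 1"
| "Q_hoff (Suc n) = [:0, 1:] * Q_hoff n + [:1, 0, 1:] * pderiv (Q_hoff n)"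

end

theory Submission
  imports Defs "HOL-Combinatorics.Multiset_Permutations"
begin


definition st :: "nat \<Rightarrow> 'a::linorder list \<Rightarrow> nat \<Rightarrow> nat" where
  "st p xs j = (if (xs!j > xs!Suc j) = even (p+j) then 1 else 0)"

definition ad :: "nat \<Rightarrow> 'a::linorder list \<Rightarrow> nat" where
  "ad p xs = (\<Sum>j<length xs - 1. st p xs j)"

lemma ad_Nil[simp]: "ad p [] = 0" and ad_single[simp]: "ad p [a] = 0"
  by (simp_all add: ad_def)

lemma ad_Cons2: "ad p (a # b # zs) = (if (a > b) = even p then 1 else 0) + ad (Suc p) (b # zs)"
proof -
  have "ad p (a # b # zs) = (\<Sum>j<Suc (length zs). st p (a#b#zs) j)" by (simp add: ad_def)
  also have "\<dots> = st p (a#b#zs) 0 + (\<Sum>j<length zs. st p (a#b#zs) (Suc j))"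
    by (rule sum.lessThan_Suc_shift)
  also have "(\<Sum>j<length zs. st p (a#b#zs) (Suc j)) = ad (Suc p) (b # zs)"
    by (simp add: ad_def st_def)
  finally show ?thesis by (simp add: st_def)
qed

lemma ad_append: "xs \<noteq> [] \<Longrightarrow> ad p (xs @ b # zs) = ad p xs
   + (if (last xs > b) = even (p + length xs - 1) then 1 else 0) + ad (p + length xs) (b # zs)"
proof (induction xs arbitrary: p)
  case Nil then show ?case by simp
next
  case (Cons a xs)
  show ?case
  proof (cases xs)
    case Nil then show ?thesis by (simp add: ad_Cons2)
  next
    case (Cons a' xs')
    have "ad p ((a # xs) @ b # zs) = (if (a > a') = even p then 1 else 0) + ad (Suc p) (xs @ b # zs)"
      using Cons by (simp add: ad_Cons2)
    also have "ad (Suc p) (xs @ b # zs) = ad (Suc p) xs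
   + (if (last xs > b) = even (Suc p + length xs - 1) then 1 else 0) + ad (Suc p + length xs) (b # zs)"
      using Cons.IH[of "Suc p"] Cons by simp
    finally show ?thesis using Cons by (simp add: ad_Cons2)
  qed
qed

lemma st_map_anti:
  assumes "\<forall>a\<in>set ys. \<forall>b\<in>set ys. a < b \<longrightarrow> f b < f a" "distinct ys" "Suc j < length ys"
  shows "st (Suc p) (map f ys) j = st p ys j"
proof -
  have ne: "ys!j \<noteq> ys!Suc j" using assms(2,3) by (simp add: nth_eq_iff_index_eq)
  have m: "ys!j \<in> set ys" "ys!Suc j \<in> set ys" using assms(3) by auto
  have "(f (ys!j) > f (ys!Suc j)) = (ys!j < ys!Suc j)"
    using assms(1) m ne by (metis linorder_neq_iff order_less_asym)
  then show ?thesis using assms(3) ne by (auto simp add: st_def)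
qed

lemma ad_map_anti:
  assumes "\<forall>a\<in>set ys. \<forall>b\<in>set ys. a < b \<longrightarrow> f b < f a" "distinct ys"
  shows "ad (Suc p) (map f ys) = ad p ys"
  unfolding ad_def using st_map_anti[OF assms] by (auto intro: sum.cong)




lemma rho_ex:
  assumes "finite (T::'a::linorder set)"
  shows "\<exists>\<rho>. (\<forall>a\<in>T. \<rho> a \<in> T \<and> \<rho> (\<rho> a) = a) \<and> (\<forall>a\<in>T. \<forall>b\<in>T. a < b \<longrightarrow> \<rho> b < \<rho> a)"
proof -
  obtain s where s: "sorted_wrt (<) s" "set s = T"
    using ex1_sorted_list_for_set_if_finite[OF assms] by blast
  have ds: "distinct s" using s(1) strict_sorted_iff by blast
  define N where "N = length s"
  define idx where "idx a = (THE i. i < N \<and> s!i = a)" for a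
  have idx: "idx a < N \<and> s!(idx a) = a" if "a \<in> T" for a
  proof -
    have "\<exists>!i. i < N \<and> s!i = a" using distinct_Ex1[OF ds] that s(2) N_def by auto
    then show ?thesis unfolding idx_def by (rule theI')
  qed
  have idx_nth: "idx (s!i) = i" if "i < N" for i
  proof -
    have "s!i \<in> T" using that s(2) N_def by auto
    from idx[OF this] show ?thesis using that ds N_def nth_eq_iff_index_eq by blast
  qed
  have mono: "s!i < s!j" if "i < j" "j < N" for i j
    using sorted_wrt_nth_less[OF s(1)] that N_def by simp
  define \<rho> where "\<rho> a = s ! (N - 1 - idx a)" for a
  have r1: "\<rho> a \<in> T" if "a \<in> T" for a
    using idx[OF that] s(2) N_def unfolding \<rho>_def by auto
  have r2: "\<rho> (\<rho> a) = a" if "a \<in> T" for a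
    using idx[OF that] idx_nth[of "N - 1 - idx a"] unfolding \<rho>_def by auto
  have r3: "\<rho> b < \<rho> a" if "a \<in> T" "b \<in> T" "a < b" for a b
  proof -
    have "idx a < idx b"
    proof (rule ccontr)
      assume "\<not> idx a < idx b"
      then have "idx b < idx a \<or> idx b = idx a" by auto
      then show False using mono[of "idx b" "idx a"] idx[OF that(1)] idx[OF that(2)] that(3) by auto
    qed
    then show ?thesis unfolding \<rho>_def using mono idx[OF that(1)] idx[OF that(2)] by auto
  qed
  show ?thesis using r1 r2 r3 by blast
qed

definition rho :: "'a::linorder set \<Rightarrow> 'a \<Rightarrow> 'a" where
  "rho T = (SOME \<rho>. (\<forall>a\<in>T. \<rho> a \<in> T \<and> \<rho> (\<rho> a) = a) \<and> (\<forall>a\<in>T. \<forall>b\<in>T. a < b \<longrightarrow> \<rho> b < \<rho> a))"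

lemma rho:
  assumes "finite T"
  shows "\<forall>a\<in>T. rho T a \<in> T \<and> rho T (rho T a) = a" "\<forall>a\<in>T. \<forall>b\<in>T. a < b \<longrightarrow> rho T b < rho T a"
  using someI_ex[OF rho_ex[OF assms]] unfolding rho_def by blast+

lemma sum_invol:
  assumes "finite S" "\<And>x. x \<in> S \<Longrightarrow> \<phi> x \<in> S" "\<And>x. x \<in> S \<Longrightarrow> \<phi> (\<phi> x) = x"
  shows "sum g S = sum (\<lambda>x. g (\<phi> x)) S"
  by (rule sum.reindex_bij_witness[where i=\<phi> and j=\<phi>]) (use assms in auto)

lemma takeWhile_ins:
  assumes "set xs \<inter> M = {}" "v \<in> M"
  shows "takeWhile (\<lambda>a. a \<notin> M) (xs @ v # ys) = xs"
  using assms by (subst takeWhile_append2) auto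

lemma sum_ins:
  fixes Ls :: "'a list set"
  assumes fin: "finite Ls" "finite M"
    and len: "\<forall>\<sigma>\<in>Ls. length \<sigma> = n"
    and free: "\<forall>\<sigma>\<in>Ls. set \<sigma> \<inter> M = {}"
    and Lb: "Lb = (\<lambda>(\<sigma>,k,v). take k \<sigma> @ v # drop k \<sigma>) ` (SIGMA \<sigma>:Ls. {..n} \<times> M)"
  shows "sum f Lb = (\<Sum>\<sigma>\<in>Ls. \<Sum>k\<le>n. \<Sum>v\<in>M. f (take k \<sigma> @ v # drop k \<sigma>))"
proof -
  have inj: "inj_on (\<lambda>(\<sigma>,k,v). take k \<sigma> @ v # drop k \<sigma>) (SIGMA \<sigma>:Ls. {..n} \<times> M)"
  proof (rule inj_onI, clarsimp)
    fix \<sigma> k v \<sigma>' k' v'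
    assume a: "\<sigma> \<in> Ls" "k \<le> n" "v \<in> M" "\<sigma>' \<in> Ls" "k' \<le> n" "v' \<in> M"
      and e: "take k \<sigma> @ v # drop k \<sigma> = take k' \<sigma>' @ v' # drop k' \<sigma>'"
    have f1: "set (take k \<sigma>) \<inter> M = {}" using free a(1) set_take_subset by fastforce
    have f2: "set (take k' \<sigma>') \<inter> M = {}" using free a(4) set_take_subset by fastforce
    have t: "take k \<sigma> = take k' \<sigma>'"
      using takeWhile_ins[OF f1 a(3), of "drop k \<sigma>"] takeWhile_ins[OF f2 a(6), of "drop k' \<sigma>'"] e by simp
    have kk: "k = k'" using arg_cong[OF t, of length] len a by simp
    have "v # drop k \<sigma> = v' # drop k' \<sigma>'" using e t by simp
    then have "v = v'" "drop k \<sigma> = drop k' \<sigma>'" by auto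
    moreover have "\<sigma> = \<sigma>'" using t \<open>drop k \<sigma> = drop k' \<sigma>'\<close> by (metis append_take_drop_id)
    ultimately show "\<sigma> = \<sigma>' \<and> k = k' \<and> v = v'" using kk by simp
  qed
  have "sum f Lb = (\<Sum>x\<in>(SIGMA \<sigma>:Ls. {..n} \<times> M). f (case x of (\<sigma>,k,v) \<Rightarrow> take k \<sigma> @ v # drop k \<sigma>))"
    unfolding Lb by (subst sum.reindex[OF inj]) (simp add: o_def)
  also have "\<dots> = (\<Sum>(\<sigma>,kv)\<in>Ls \<times> ({..n} \<times> M). f (case kv of (k,v) \<Rightarrow> take k \<sigma> @ v # drop k \<sigma>))"
    by (rule sum.cong) auto
  also have "\<dots> = (\<Sum>\<sigma>\<in>Ls. \<Sum>kv\<in>{..n} \<times> M. f (case kv of (k,v) \<Rightarrow> take k \<sigma> @ v # drop k \<sigma>))"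
    by (rule sum.cartesian_product[symmetric])
  also have "\<dots> = (\<Sum>\<sigma>\<in>Ls. \<Sum>k\<le>n. \<Sum>v\<in>M. f (take k \<sigma> @ v # drop k \<sigma>))"
    by (rule sum.cong[OF refl], subst sum.cartesian_product, rule sum.cong) auto
  finally show ?thesis .
qed




abbreviation pX :: "real poly" where "pX \<equiv> [:0,1:]"

lemma pderiv_pX_pow: "pderiv (pX ^ D) = smult (real D) (pX ^ (D - 1))"
proof (cases D)
  case (Suc d)
  show ?thesis unfolding Suc by (subst pderiv_power_Suc) (simp add: pderiv_pCons)
qed simp

lemma pderiv_sum': "pderiv (sum f I) = (\<Sum>i\<in>I. pderiv (f i))"
  by (induction I rule: infinite_finite_induct) (auto simp: pderiv_add)

lemma count01:
  assumes "\<forall>j<N. f j \<le> (1::nat)"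
  shows "(\<Sum>j<N. pX ^ (sum f {..<N} - f j)) = (1 - pX) * pderiv (pX ^ sum f {..<N}) + smult (real N) (pX ^ sum f {..<N})"
proof -
  define D where "D = sum f {..<N}"
  define A1 where "A1 = {j. j < N \<and> f j = 1}"
  define A0 where "A0 = {j. j < N \<and> f j = 0}"
  have U: "{..<N} = A1 \<union> A0" "A1 \<inter> A0 = {}" using assms by (auto simp: A1_def A0_def)
  have fin: "finite A1" "finite A0" by (auto simp: A1_def A0_def)
  have "(\<Sum>j<N. pX ^ (D - f j)) = (\<Sum>j\<in>A1. pX ^ (D - f j)) + (\<Sum>j\<in>A0. pX ^ (D - f j))"
    unfolding U(1) by (rule sum.union_disjoint[OF fin U(2)])
  also have "\<dots> = (\<Sum>j\<in>A1. pX ^ (D - 1)) + (\<Sum>j\<in>A0. pX ^ D)"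
    by (auto simp: A1_def A0_def)
  also have "\<dots> = smult (real (card A1)) (pX ^ (D - 1)) + smult (real (card A0)) (pX ^ D)"
    by (simp add: of_nat_mult_conv_smult)
  finally have S: "(\<Sum>j<N. pX ^ (D - f j)) = smult (real (card A1)) (pX ^ (D - 1)) + smult (real (card A0)) (pX ^ D)" .
  have "D = sum f A1 + sum f A0" unfolding D_def U(1) by (rule sum.union_disjoint[OF fin U(2)])
  also have "\<dots> = card A1" by (auto simp: A1_def A0_def)
  finally have c1: "card A1 = D" by simp
  have "card A1 + card A0 = N" using card_Un_disjoint[OF fin U(2)] U(1) by (metis card_lessThan)
  then have c0: "real (card A0) = real N - real D" using c1 by linarith
  show ?thesis
    unfolding D_def[symmetric] S c1 c0 pderiv_pX_pow
  proof (cases D)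
    case 0 then show "smult (real D) (pX ^ (D - 1)) + smult (real N - real D) (pX ^ D) =
    (1 - pX) * smult (real D) (pX ^ (D - 1)) + smult (real N) (pX ^ D)" by simp
  next
    case (Suc d)
    have key: "smult a q + smult (b - a) (pX * q) = (1 - pX) * smult a q + smult b (pX * q)" for a b :: real and q
      by (simp add: algebra_simps smult_diff_left del: mult_pCons_left)
    show "smult (real D) (pX ^ (D - 1)) + smult (real N - real D) (pX ^ D) =
    (1 - pX) * smult (real D) (pX ^ (D - 1)) + smult (real N) (pX ^ D)"
      using key[of "real D" "pX ^ d" "real N"] Suc by (simp del: mult_pCons_left)
  qed
qed




definition phi :: "nat \<Rightarrow> 'a::linorder list \<Rightarrow> 'a list" where
  "phi k \<sigma> = take k \<sigma> @ map (rho (set (drop k \<sigma>))) (drop k \<sigma>)"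

lemma rho_set:
  assumes "distinct ys"
  shows "set (map (rho (set ys)) ys) = set ys" "distinct (map (rho (set ys)) ys)"
    "map (rho (set ys)) (map (rho (set ys)) ys) = ys"
proof -
  have r: "\<forall>a\<in>set ys. rho (set ys) a \<in> set ys \<and> rho (set ys) (rho (set ys) a) = a" using rho(1) by blast
  have inj: "inj_on (rho (set ys)) (set ys)" by (rule inj_on_inverseI[where g="rho (set ys)"]) (use r in auto)
  show "set (map (rho (set ys)) ys) = set ys"
  proof
    show "set (map (rho (set ys)) ys) \<subseteq> set ys" using r by auto
    show "set ys \<subseteq> set (map (rho (set ys)) ys)"
    proof
      fix a assume "a \<in> set ys"
      then show "a \<in> set (map (rho (set ys)) ys)" using r by (metis image_eqI set_map)
    qed
  qed
  show "distinct (map (rho (set ys)) ys)" using inj assms by (simp add: distinct_map)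
  show "map (rho (set ys)) (map (rho (set ys)) ys) = ys" using r by (simp add: map_idI)
qed

lemma phi_props:
  assumes "\<sigma> \<in> permutations_of_set V" "k \<le> length \<sigma>"
  shows "phi k \<sigma> \<in> permutations_of_set V" "phi k (phi k \<sigma>) = \<sigma>"
    "take k (phi k \<sigma>) = take k \<sigma>" "drop k (phi k \<sigma>) = map (rho (set (drop k \<sigma>))) (drop k \<sigma>)"
    "length (phi k \<sigma>) = length \<sigma>"
proof -
  have d: "distinct \<sigma>" "set \<sigma> = V" using assms(1) by (auto dest: permutations_of_setD)
  have dd: "distinct (drop k \<sigma>)" using d by simp
  note R = rho_set[OF dd]
  have lt: "length (take k \<sigma>) = k" using assms(2) by simp
  show t: "take k (phi k \<sigma>) = take k \<sigma>" unfolding phi_def using lt by simp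
  show dr: "drop k (phi k \<sigma>) = map (rho (set (drop k \<sigma>))) (drop k \<sigma>)" unfolding phi_def using lt by simp
  show "length (phi k \<sigma>) = length \<sigma>" unfolding phi_def using assms(2) by simp
  have "set (phi k \<sigma>) = set (take k \<sigma>) \<union> set (drop k \<sigma>)" unfolding phi_def using R by simp
  also have "\<dots> = V" using d by (metis set_append append_take_drop_id)
  finally have sV: "set (phi k \<sigma>) = V" .
  have disj: "set (take k \<sigma>) \<inter> set (drop k \<sigma>) = {}" using d(1) by (metis distinct_append append_take_drop_id)
  have "distinct (phi k \<sigma>)" unfolding phi_def using R disj d by simp
  then show "phi k \<sigma> \<in> permutations_of_set V" using sV by auto
  show "phi k (phi k \<sigma>) = \<sigma>" unfolding phi_def[of k "phi k \<sigma>"] t dr R(1) R(3) by simp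
qed

abbreviation LA :: "nat \<Rightarrow> nat list set" where "LA n \<equiv> permutations_of_set {1..n}"

lemma LA_len: "\<sigma> \<in> LA n \<Longrightarrow> length \<sigma> = n"
  by (metis card_atLeastAtMost diff_Suc_1 distinct_card permutations_of_setD)

lemma ins_perm:
  assumes "distinct \<sigma>" "v \<notin> set \<sigma>"
  shows "distinct (take k \<sigma> @ v # drop k \<sigma>)" "set (take k \<sigma> @ v # drop k \<sigma>) = insert v (set \<sigma>)"
proof -
  show s: "set (take k \<sigma> @ v # drop k \<sigma>) = insert v (set \<sigma>)"
    by (metis Un_insert_right append_take_drop_id list.simps(15) set_append)
  have "card (set (take k \<sigma> @ v # drop k \<sigma>)) = length (take k \<sigma> @ v # drop k \<sigma>)"
    unfolding s using assms by (simp add: distinct_card)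
  then show "distinct (take k \<sigma> @ v # drop k \<sigma>)" by (rule card_distinct)
qed

lemma LA_Suc: "LA (Suc n) = (\<lambda>(\<sigma>,k,v). take k \<sigma> @ v # drop k \<sigma>) ` (SIGMA \<sigma>:LA n. {..n} \<times> {Suc n})"
proof
  show "(\<lambda>(\<sigma>,k,v). take k \<sigma> @ v # drop k \<sigma>) ` (SIGMA \<sigma>:LA n. {..n} \<times> {Suc n}) \<subseteq> LA (Suc n)"
  proof
    fix w assume "w \<in> (\<lambda>(\<sigma>,k,v). take k \<sigma> @ v # drop k \<sigma>) ` (SIGMA \<sigma>:LA n. {..n} \<times> {Suc n})"
    then obtain \<sigma> k where a: "\<sigma> \<in> LA n" "k \<le> n" and wd: "w = take k \<sigma> @ Suc n # drop k \<sigma>" by auto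
    have d: "distinct \<sigma>" "set \<sigma> = {1..n}" using a by (auto dest: permutations_of_setD)
    have "Suc n \<notin> set \<sigma>" using d by auto
    note I = ins_perm[OF d(1) this, of k]
    have "set w = {1..Suc n}" using I(2) d wd by auto
    then show "w \<in> LA (Suc n)"
      using I(1) wd by (intro permutations_of_setI) auto
  qed
  show "LA (Suc n) \<subseteq> (\<lambda>(\<sigma>,k,v). take k \<sigma> @ v # drop k \<sigma>) ` (SIGMA \<sigma>:LA n. {..n} \<times> {Suc n})"
  proof
    fix w assume w: "w \<in> LA (Suc n)"
    have d: "distinct w" "set w = {1..Suc n}" using w by (auto dest: permutations_of_setD)
    then have "Suc n \<in> set w" by auto
    then obtain xs ys where wx: "w = xs @ Suc n # ys" by (meson split_list)
    have ds: "distinct (xs @ ys)" "Suc n \<notin> set (xs @ ys)" using d(1) wx by auto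
    have "set (xs @ ys) = {1..Suc n} - {Suc n}" using d wx ds by auto
    also have "\<dots> = {1..n}" by auto
    finally have xl: "xs @ ys \<in> LA n" using ds by auto
    moreover have "length xs \<le> n" using LA_len[OF xl] by simp
    moreover have "w = take (length xs) (xs @ ys) @ Suc n # drop (length xs) (xs @ ys)" using wx by simp
    ultimately show "w \<in> (\<lambda>(\<sigma>,k,v). take k \<sigma> @ v # drop k \<sigma>) ` (SIGMA \<sigma>:LA n. {..n} \<times> {Suc n})"
      by (intro rev_image_eqI[of "(xs @ ys, length xs, Suc n)"]) auto
  qed
qed

lemma LA_dec:
  "(\<Sum>w\<in>LA (Suc n). f w) = (\<Sum>\<sigma>\<in>LA n. \<Sum>k\<le>n. f (take k \<sigma> @ Suc n # drop k \<sigma>))"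
proof -
  have "(\<Sum>w\<in>LA (Suc n). f w) = (\<Sum>\<sigma>\<in>LA n. \<Sum>k\<le>n. \<Sum>v\<in>{Suc n}. f (take k \<sigma> @ v # drop k \<sigma>))"
    by (rule sum_ins[OF _ _ _ _ LA_Suc]) (auto simp: LA_len dest: permutations_of_setD)
  then show ?thesis by simp
qed

lemma LA_dec_flip:
  "(\<Sum>w\<in>LA (Suc n). f w) = (\<Sum>\<sigma>\<in>LA n. \<Sum>k\<le>n. f (take k \<sigma> @ Suc n # map (rho (set (drop k \<sigma>))) (drop k \<sigma>)))"
proof -
  have "(\<Sum>w\<in>LA (Suc n). f w) = (\<Sum>k\<le>n. \<Sum>\<sigma>\<in>LA n. f (take k \<sigma> @ Suc n # drop k \<sigma>))"
    unfolding LA_dec by (rule sum.swap)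
  also have "\<dots> = (\<Sum>k\<le>n. \<Sum>\<sigma>\<in>LA n. f (take k (phi k \<sigma>) @ Suc n # drop k (phi k \<sigma>)))"
  proof (rule sum.cong[OF refl])
    fix k assume k: "k \<in> {..n}"
    show "(\<Sum>\<sigma>\<in>LA n. f (take k \<sigma> @ Suc n # drop k \<sigma>)) = (\<Sum>\<sigma>\<in>LA n. f (take k (phi k \<sigma>) @ Suc n # drop k (phi k \<sigma>)))"
    proof (rule sum_invol[of "LA n" "phi k" "\<lambda>\<sigma>. f (take k \<sigma> @ Suc n # drop k \<sigma>)"])
      fix \<sigma> assume s: "\<sigma> \<in> LA n"
      then have kl: "k \<le> length \<sigma>" using LA_len k by auto
      show "phi k \<sigma> \<in> LA n" by (rule phi_props(1)[OF s kl])
      show "phi k (phi k \<sigma>) = \<sigma>" by (rule phi_props(2)[OF s kl])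
    qed simp
  qed
  also have "\<dots> = (\<Sum>k\<le>n. \<Sum>\<sigma>\<in>LA n. f (take k \<sigma> @ Suc n # map (rho (set (drop k \<sigma>))) (drop k \<sigma>)))"
  proof (rule sum.cong[OF refl], rule sum.cong[OF refl])
    fix k \<sigma> assume k: "k \<in> {..n}" and s: "\<sigma> \<in> LA n"
    then have kl: "k \<le> length \<sigma>" using LA_len by auto
    show "f (take k (phi k \<sigma>) @ Suc n # drop k (phi k \<sigma>)) =
         f (take k \<sigma> @ Suc n # map (rho (set (drop k \<sigma>))) (drop k \<sigma>))"
      using phi_props(3,4)[OF s kl] by simp
  qed
  also have "\<dots> = (\<Sum>\<sigma>\<in>LA n. \<Sum>k\<le>n. f (take k \<sigma> @ Suc n # map (rho (set (drop k \<sigma>))) (drop k \<sigma>)))"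
    by (rule sum.swap)
  finally show ?thesis .
qed




lemma ad_split:
  assumes "0 < k" "k < length \<sigma>"
  shows "ad p \<sigma> = ad p (take k \<sigma>) + st p \<sigma> (k-1) + ad (p+k) (drop k \<sigma>)"
proof -
  have e: "\<sigma> = take k \<sigma> @ (\<sigma>!k) # drop (Suc k) \<sigma>" using assms by (simp add: id_take_nth_drop)
  have ne: "take k \<sigma> \<noteq> []" using assms by (cases \<sigma>) auto
  have l: "last (take k \<sigma>) = \<sigma>!(k-1)" using assms ne by (simp add: last_conv_nth min_def)
  have d: "drop k \<sigma> = \<sigma>!k # drop (Suc k) \<sigma>" using assms by (simp add: Cons_nth_drop_Suc)
  have "ad p \<sigma> = ad p (take k \<sigma> @ (\<sigma>!k) # drop (Suc k) \<sigma>)" using e by simp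
  also have "\<dots> = ad p (take k \<sigma>) + (if (last (take k \<sigma>) > \<sigma>!k) = even (p + length (take k \<sigma>) - 1) then 1 else 0)
     + ad (p + length (take k \<sigma>)) (\<sigma>!k # drop (Suc k) \<sigma>)" by (rule ad_append[OF ne])
  also have "\<dots> = ad p (take k \<sigma>) + st p \<sigma> (k-1) + ad (p+k) (drop k \<sigma>)"
    using assms l d by (simp add: st_def)
  finally show ?thesis .
qed

lemma rho_anti: "finite T \<Longrightarrow> \<forall>a\<in>T. \<forall>b\<in>T. a < b \<longrightarrow> rho T b < rho T a"
  using rho(2) by blast

lemma ad_ins_A:
  assumes s: "\<sigma> \<in> LA (Suc m)" and k: "k \<le> Suc m"
  defines "ys' \<equiv> map (rho (set (drop k \<sigma>))) (drop k \<sigma>)"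
  shows "ad p (take k \<sigma> @ Suc (Suc m) # ys') =
     (if k = 0 then ad p \<sigma> + (if even p then 1 else 0)
      else if k = Suc m then ad p \<sigma> + (if even (p + Suc m) then 1 else 0)
      else ad p (take k \<sigma>) + ad (p+k) (drop k \<sigma>) + (if even (p+k) then 2 else 0))"
proof -
  have d: "distinct \<sigma>" "set \<sigma> = {1..Suc m}" using s by (auto dest: permutations_of_setD)
  have len: "length \<sigma> = Suc m" using LA_len[OF s] .
  have lt: "\<forall>a\<in>set \<sigma>. a < Suc (Suc m)" using d by auto
  have ddrop: "distinct (drop k \<sigma>)" using d by simp
  have anti: "\<forall>a\<in>set (drop k \<sigma>). \<forall>b\<in>set (drop k \<sigma>). a < b \<longrightarrow> rho (set (drop k \<sigma>)) b < rho (set (drop k \<sigma>)) a"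
    by (rule rho_anti) simp
  have adys: "ad (Suc q) ys' = ad q (drop k \<sigma>)" for q
    unfolding ys'_def by (rule ad_map_anti[OF anti ddrop])
  have sys: "set ys' = set (drop k \<sigma>)" unfolding ys'_def by (rule rho_set(1)[OF ddrop])
  show ?thesis
  proof (cases "k = 0")
    case True
    then have "ys' \<noteq> []" using sys len by (metis drop0 list.size(3) nat.distinct(1) set_empty)
    then obtain y ys where y: "ys' = y # ys" by (cases ys') auto
    have "y < Suc (Suc m)" using sys y lt True by (metis list.set_intros(1) drop0)
    then have "ad p (Suc (Suc m) # ys') = (if even p then 1 else 0) + ad (Suc p) ys'"
      using y by (simp add: ad_Cons2)
    then show ?thesis using True adys by simp
  next
    case False
    note k0 = False
    show ?thesis
    proof (cases "k = Suc m")
      case True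
      then have ys0: "ys' = []" unfolding ys'_def using len by simp
      have tk: "take k \<sigma> = \<sigma>" using True len by simp
      have ne: "\<sigma> \<noteq> []" using len by auto
      have "last \<sigma> < Suc (Suc m)" using lt ne by simp
      then have "ad p (\<sigma> @ [Suc (Suc m)]) = ad p \<sigma> + (if even (p + Suc m) then 1 else 0)"
        using ad_append[OF ne, of p "Suc (Suc m)" "[]"] len by auto
      then show ?thesis using True k0 ys0 tk by simp
    next
      case False
      then have kl: "0 < k" "k < length \<sigma>" using k k0 len by auto
      have ne: "take k \<sigma> \<noteq> []" using kl by (cases \<sigma>) auto
      have "ys' \<noteq> []" unfolding ys'_def using kl by simp
      then obtain y ys where y: "ys' = y # ys" by (cases ys') auto
      have "y \<in> set (drop k \<sigma>)" using sys y by auto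
      then have yl: "y < Suc (Suc m)" using lt by (meson in_set_dropD)
      have ll: "last (take k \<sigma>) < Suc (Suc m)" using lt ne by (meson last_in_set in_set_takeD)
      have "ad p (take k \<sigma> @ Suc (Suc m) # ys') = ad p (take k \<sigma>) + (if (last (take k \<sigma>) > Suc (Suc m)) = even (p + length (take k \<sigma>) - 1) then 1 else 0)
     + ad (p + length (take k \<sigma>)) (Suc (Suc m) # ys')" by (rule ad_append[OF ne])
      also have "ad (p + length (take k \<sigma>)) (Suc (Suc m) # ys') = (if even (p+k) then 1 else 0) + ad (Suc (p+k)) ys'"
        using y yl kl by (simp add: ad_Cons2)
      finally show ?thesis using adys[of "p+k"] kl ll k0 False by auto
    qed
  qed
qed




definition Ap :: "nat \<Rightarrow> real poly" where
  "Ap n = (\<Sum>\<sigma>\<in>LA n. pX ^ ad 0 \<sigma>)"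

definition TA :: "nat \<Rightarrow> nat \<Rightarrow> nat list \<Rightarrow> real poly" where
  "TA m p \<sigma> = pX ^ ad p \<sigma> * (pX ^ (if even p then 1 else 0) + pX ^ (if even (p + Suc m) then 1 else 0))
    + (\<Sum>j<m. pX ^ (ad p \<sigma> - st p \<sigma> j) * pX ^ (if even (p+j) then 0 else 2))"

lemma pX_lits: "1 + pX = [:1,1:]" "pX + 1 = [:1,1:]" "1 + pX * pX = [:1,0,1:]" "pX * pX + 1 = [:1,0,1:]"
   "1 + pCons 0 pX = pCons 1 pX" "pCons 0 pX + 1 = pCons 1 pX"
  by (simp_all add: one_pCons)

lemma SA:
  assumes s: "\<sigma> \<in> LA (Suc m)"
  shows "(\<Sum>k\<le>Suc m. pX ^ ad p (take k \<sigma> @ Suc (Suc m) # map (rho (set (drop k \<sigma>))) (drop k \<sigma>))) = TA m p \<sigma>"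
proof -
  define g where "g k = pX ^ ad p (take k \<sigma> @ Suc (Suc m) # map (rho (set (drop k \<sigma>))) (drop k \<sigma>))" for k
  have len: "length \<sigma> = Suc m" using LA_len[OF s] .
  have "(\<Sum>k\<le>Suc m. g k) = (\<Sum>k<Suc m. g k) + g (Suc m)" by (simp add: lessThan_Suc_atMost[symmetric])
  also have "(\<Sum>k<Suc m. g k) = g 0 + (\<Sum>j<m. g (Suc j))" by (rule sum.lessThan_Suc_shift)
  also have "g 0 = pX ^ ad p \<sigma> * pX ^ (if even p then 1 else 0)"
    unfolding g_def using ad_ins_A[OF s, of 0 p] by (simp add: power_add)
  also have "g (Suc m) = pX ^ ad p \<sigma> * pX ^ (if even (p + Suc m) then 1 else 0)"
    unfolding g_def using ad_ins_A[OF s, of "Suc m" p] by (simp add: power_add)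
  also have "(\<Sum>j<m. g (Suc j)) = (\<Sum>j<m. pX ^ (ad p \<sigma> - st p \<sigma> j) * pX ^ (if even (p+j) then 0 else 2))"
  proof (rule sum.cong[OF refl])
    fix j assume j: "j \<in> {..<m}"
    have sp: "ad p \<sigma> = ad p (take (Suc j) \<sigma>) + st p \<sigma> j + ad (p + Suc j) (drop (Suc j) \<sigma>)"
      using ad_split[of "Suc j" \<sigma> p] j len by simp
    have "g (Suc j) = pX ^ (ad p (take (Suc j) \<sigma>) + ad (p + Suc j) (drop (Suc j) \<sigma>) + (if even (p + Suc j) then 2 else 0))"
      unfolding g_def using ad_ins_A[OF s, of "Suc j" p] j by simp
    also have "\<dots> = pX ^ (ad p \<sigma> - st p \<sigma> j) * pX ^ (if even (p+j) then 0 else 2)"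
      using sp by (simp add: power_add)
    finally show "g (Suc j) = pX ^ (ad p \<sigma> - st p \<sigma> j) * pX ^ (if even (p+j) then 0 else 2)" .
  qed
  finally show ?thesis unfolding TA_def g_def[symmetric] by (simp add: algebra_simps)
qed

lemma TA_comb:
  assumes s: "\<sigma> \<in> LA (Suc m)"
  shows "TA m 0 \<sigma> + TA m 1 (phi 0 \<sigma>) = [:2,2:] * pX ^ ad 0 \<sigma>
      + [:1,0,1:] * ((1 - pX) * pderiv (pX ^ ad 0 \<sigma>) + smult (real m) (pX ^ ad 0 \<sigma>))"
proof -
  have d: "distinct \<sigma>" using s by (auto dest: permutations_of_setD)
  have len: "length \<sigma> = Suc m" using LA_len[OF s] .
  have ph: "phi 0 \<sigma> = map (rho (set \<sigma>)) \<sigma>" by (simp add: phi_def)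
  have anti: "\<forall>a\<in>set \<sigma>. \<forall>b\<in>set \<sigma>. a < b \<longrightarrow> rho (set \<sigma>) b < rho (set \<sigma>) a" by (rule rho_anti) simp
  have a1: "ad 1 (phi 0 \<sigma>) = ad 0 \<sigma>" unfolding ph using ad_map_anti[OF anti d, of 0] by simp
  have s1: "st (Suc 0) (phi 0 \<sigma>) j = st 0 \<sigma> j" if "j < m" for j
    unfolding ph using st_map_anti[OF anti d, of j 0] that len by simp
  define a where "a = ad 0 \<sigma>"
  have sa: "sum (st 0 \<sigma>) {..<m} = a" unfolding a_def ad_def len by simp
  have c: "(\<Sum>j<m. pX ^ (a - st 0 \<sigma> j)) = (1 - pX) * pderiv (pX ^ a) + smult (real m) (pX ^ a)"
    using count01[of m "st 0 \<sigma>"] sa by (simp add: st_def)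
  have e1: "pX ^ (if even (Suc m) then 1 else 0) + pX ^ (if even (1 + Suc m) then 1 else 0) = [:1,1:]"
    by (cases "even m") (auto simp: pX_lits)
  have e2: "pX ^ (if even j then 0 else 2) + pX ^ (if even (1+j) then 0 else 2) = [:1,0,1:]" for j :: nat
    by (cases "even j") (auto simp: power2_eq_square pX_lits simp del: mult_pCons_left)
  have t0: "TA m 0 \<sigma> = pX ^ a * (pX + pX ^ (if even (Suc m) then 1 else 0))
     + (\<Sum>j<m. pX ^ (a - st 0 \<sigma> j) * pX ^ (if even j then 0 else 2))"
    unfolding TA_def a_def by simp
  have t1: "TA m 1 (phi 0 \<sigma>) = pX ^ a * (1 + pX ^ (if even (1 + Suc m) then 1 else 0))
     + (\<Sum>j<m. pX ^ (a - st 0 \<sigma> j) * pX ^ (if even (1+j) then 0 else 2))"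
    unfolding TA_def a1 a_def[symmetric]
    by (rule arg_cong2[where f="(+)"], simp, rule sum.cong[OF refl]) (simp add: s1)
  have "TA m 0 \<sigma> + TA m 1 (phi 0 \<sigma>) = pX ^ a * ((pX + 1) + (pX ^ (if even (Suc m) then 1 else 0) + pX ^ (if even (1 + Suc m) then 1 else 0)))
     + (\<Sum>j<m. pX ^ (a - st 0 \<sigma> j) * (pX ^ (if even j then 0 else 2) + pX ^ (if even (1+j) then 0 else 2)))"
    unfolding t0 t1 by (simp add: distrib_left sum.distrib)
  also have "\<dots> = pX ^ a * ([:1,1:] + [:1,1:]) + [:1,0,1:] * (\<Sum>j<m. pX ^ (a - st 0 \<sigma> j))"
    unfolding e1 e2 pX_lits by (simp add: sum_distrib_left mult.commute)
  also have "\<dots> = [:2,2:] * pX ^ a + [:1,0,1:] * ((1 - pX) * pderiv (pX ^ a) + smult (real m) (pX ^ a))"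
    unfolding c by (simp add: mult.commute del: mult_pCons_left)
  finally show ?thesis unfolding a_def .
qed




lemma smult_sum': "smult c (sum f A) = (\<Sum>x\<in>A. smult c (f x))"
  by (induction A rule: infinite_finite_induct) (auto simp: smult_add_right)

lemma Ap_dec: "(\<Sum>w\<in>LA (Suc (Suc m)). pX ^ ad p w) = (\<Sum>\<sigma>\<in>LA (Suc m). TA m p \<sigma>)"
  by (subst LA_dec_flip) (rule sum.cong[OF refl], rule SA)

lemma sum_phi0:
  "(\<Sum>\<sigma>\<in>LA n. f \<sigma>) = (\<Sum>\<sigma>\<in>LA n. f (phi 0 \<sigma>))"
  by (rule sum_invol) (auto intro: phi_props(1,2))

lemma Ap_one: "(\<Sum>w\<in>LA n. pX ^ ad (Suc 0) w) = Ap n"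
proof -
  have "(\<Sum>w\<in>LA n. pX ^ ad (Suc 0) w) = (\<Sum>w\<in>LA n. pX ^ ad (Suc 0) (phi 0 w))" by (rule sum_phi0)
  also have "\<dots> = Ap n" unfolding Ap_def
  proof (rule sum.cong[OF refl])
    fix w assume w: "w \<in> LA n"
    have d: "distinct w" using w by (auto dest: permutations_of_setD)
    have anti: "\<forall>a\<in>set w. \<forall>b\<in>set w. a < b \<longrightarrow> rho (set w) b < rho (set w) a" by (rule rho_anti) simp
    show "pX ^ ad (Suc 0) (phi 0 w) = pX ^ ad 0 w"
      using ad_map_anti[OF anti d, of 0] by (simp add: phi_def)
  qed
  finally show ?thesis .
qed

lemma Ap_rec:
  "Ap (Suc (Suc m)) + Ap (Suc (Suc m)) = [:2,2:] * Ap (Suc m)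
     + [:1,0,1:] * ((1 - pX) * pderiv (Ap (Suc m)) + smult (real m) (Ap (Suc m)))"
proof -
  have "Ap (Suc (Suc m)) + Ap (Suc (Suc m)) = (\<Sum>\<sigma>\<in>LA (Suc m). TA m 0 \<sigma>) + (\<Sum>\<sigma>\<in>LA (Suc m). TA m 1 \<sigma>)"
  proof -
    have h0: "Ap (Suc (Suc m)) = (\<Sum>\<sigma>\<in>LA (Suc m). TA m 0 \<sigma>)" unfolding Ap_def by (rule Ap_dec)
    have h1: "Ap (Suc (Suc m)) = (\<Sum>\<sigma>\<in>LA (Suc m). TA m 1 \<sigma>)"
      using Ap_dec[where m=m and p=1] Ap_one[of "Suc (Suc m)"] by simp
    show ?thesis by (rule arg_cong2[where f="(+)", OF h0 h1])
  qed
  also have "(\<Sum>\<sigma>\<in>LA (Suc m). TA m 1 \<sigma>) = (\<Sum>\<sigma>\<in>LA (Suc m). TA m 1 (phi 0 \<sigma>))" by (rule sum_phi0)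
  also have "(\<Sum>\<sigma>\<in>LA (Suc m). TA m 0 \<sigma>) + \<dots> = (\<Sum>\<sigma>\<in>LA (Suc m). TA m 0 \<sigma> + TA m 1 (phi 0 \<sigma>))"
    by (rule sum.distrib[symmetric])
  also have "\<dots> = (\<Sum>\<sigma>\<in>LA (Suc m). [:2,2:] * pX ^ ad 0 \<sigma>
      + [:1,0,1:] * ((1 - pX) * pderiv (pX ^ ad 0 \<sigma>) + smult (real m) (pX ^ ad 0 \<sigma>)))"
    by (rule sum.cong[OF refl]) (rule TA_comb)
  also have "\<dots> = [:2,2:] * Ap (Suc m)
     + [:1,0,1:] * ((1 - pX) * pderiv (Ap (Suc m)) + smult (real m) (Ap (Suc m)))"
    unfolding Ap_def by (simp add: sum.distrib sum_distrib_left distrib_left pderiv_sum' smult_sum' del: mult_pCons_left)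
  finally show ?thesis .
qed




definition SL :: "nat \<Rightarrow> int list set" where
  "SL n = {w. distinct (map abs w) \<and> set (map abs w) = {1..int n}}"

definition Bp :: "nat \<Rightarrow> real poly" where
  "Bp n = (\<Sum>w\<in>SL n. pX ^ ad 1 (0 # w))"

lemma SL_len: "w \<in> SL n \<Longrightarrow> length w = n"
  unfolding SL_def by (metis (mono_tags, lifting) card_atLeastAtMost_int distinct_card length_map mem_Collect_eq nat_int diff_add_cancel add_diff_cancel_right')

lemma SL_abs: "w \<in> SL n \<Longrightarrow> a \<in> set w \<Longrightarrow> 1 \<le> abs a \<and> abs a \<le> int n"
  unfolding SL_def by auto

lemma SL_fin: "finite (SL n)"
proof (rule finite_subset)
  show "SL n \<subseteq> {w. set w \<subseteq> {-int n..int n} \<and> length w \<le> n}"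
    using SL_len SL_abs by fastforce
  show "finite {w. set w \<subseteq> {-int n..int n} \<and> length w \<le> n}" by (rule finite_lists_length_le) simp
qed

lemma SL_distinct: "w \<in> SL n \<Longrightarrow> distinct w"
  unfolding SL_def using distinct_map by blast

definition psi :: "nat \<Rightarrow> int list \<Rightarrow> int list" where
  "psi k w = take k w @ map uminus (drop k w)"

lemma psi_props:
  assumes "w \<in> SL n"
  shows "psi k w \<in> SL n" "psi k (psi k w) = w"
proof -
  have "map abs (psi k w) = map abs w" unfolding psi_def
    by (metis (no_types, lifting) abs_minus_cancel append_take_drop_id map_append map_map comp_def map_eq_conv)
  then show "psi k w \<in> SL n" using assms unfolding SL_def mem_Collect_eq by metis
  show "psi k (psi k w) = w" unfolding psi_def by (cases "k \<le> length w") (simp_all add: comp_def)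
qed

lemma SL_Suc: "SL (Suc n) = (\<lambda>(\<sigma>,k,v). take k \<sigma> @ v # drop k \<sigma>) ` (SIGMA \<sigma>:SL n. {..n} \<times> {int (Suc n), - int (Suc n)})"
proof
  show "(\<lambda>(\<sigma>,k,v). take k \<sigma> @ v # drop k \<sigma>) ` (SIGMA \<sigma>:SL n. {..n} \<times> {int (Suc n), - int (Suc n)}) \<subseteq> SL (Suc n)"
  proof
    fix w assume "w \<in> (\<lambda>(\<sigma>,k,v). take k \<sigma> @ v # drop k \<sigma>) ` (SIGMA \<sigma>:SL n. {..n} \<times> {int (Suc n), - int (Suc n)})"
    then obtain \<sigma> k v where a: "\<sigma> \<in> SL n" "k \<le> n" "v \<in> {int (Suc n), - int (Suc n)}" and wd: "w = take k \<sigma> @ v # drop k \<sigma>" by auto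
    have d: "distinct (map abs \<sigma>)" "set (map abs \<sigma>) = {1..int n}" using a unfolding SL_def by auto
    have av: "abs v = int (Suc n)" using a(3) by auto
    have "abs v \<notin> set (map abs \<sigma>)" using d av by auto
    note I = ins_perm[OF d(1) this, of k]
    have mw: "map abs w = take k (map abs \<sigma>) @ abs v # drop k (map abs \<sigma>)" using wd by (simp add: take_map drop_map)
    have "set (map abs w) = {1..int (Suc n)}" unfolding mw I(2) d(2) using av by auto
    then show "w \<in> SL (Suc n)" using I(1) mw unfolding SL_def mem_Collect_eq by metis
  qed
  show "SL (Suc n) \<subseteq> (\<lambda>(\<sigma>,k,v). take k \<sigma> @ v # drop k \<sigma>) ` (SIGMA \<sigma>:SL n. {..n} \<times> {int (Suc n), - int (Suc n)})"
  proof
    fix w assume w: "w \<in> SL (Suc n)"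
    have d: "distinct (map abs w)" "set (map abs w) = {1..int (Suc n)}" using w unfolding SL_def by auto
    then have "int (Suc n) \<in> abs ` set w" by auto
    then obtain e where e: "e \<in> set w" "abs e = int (Suc n)" by auto
    then obtain xs ys where wx: "w = xs @ e # ys" by (meson split_list)
    have ds: "distinct (map abs (xs @ ys))" "abs e \<notin> set (map abs (xs @ ys))" using d(1) wx by auto
    have "set (map abs (xs @ ys)) = {1..int (Suc n)} - {int (Suc n)}" using d wx ds e by auto
    also have "\<dots> = {1..int n}" by auto
    finally have xl: "xs @ ys \<in> SL n" using ds unfolding SL_def by auto
    moreover have "length xs \<le> n" using SL_len[OF xl] by simp
    moreover have "e \<in> {int (Suc n), - int (Suc n)}" using e by auto
    moreover have "w = take (length xs) (xs @ ys) @ e # drop (length xs) (xs @ ys)" using wx by simp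
    ultimately show "w \<in> (\<lambda>(\<sigma>,k,v). take k \<sigma> @ v # drop k \<sigma>) ` (SIGMA \<sigma>:SL n. {..n} \<times> {int (Suc n), - int (Suc n)})"
      by (intro rev_image_eqI[of "(xs @ ys, length xs, e)"]) auto
  qed
qed

lemma SL_dec_flip:
  "(\<Sum>w\<in>SL (Suc n). f w) = (\<Sum>\<sigma>\<in>SL n. \<Sum>k\<le>n. \<Sum>v\<in>{int (Suc n), - int (Suc n)}. f (take k \<sigma> @ v # map uminus (drop k \<sigma>)))"
proof -
  have "(\<Sum>w\<in>SL (Suc n). f w) = (\<Sum>\<sigma>\<in>SL n. \<Sum>k\<le>n. \<Sum>v\<in>{int (Suc n), - int (Suc n)}. f (take k \<sigma> @ v # drop k \<sigma>))"
  proof (rule sum_ins[OF SL_fin _ _ _ SL_Suc])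
    show "\<forall>\<sigma>\<in>SL n. length \<sigma> = n" using SL_len by blast
    show "\<forall>\<sigma>\<in>SL n. set \<sigma> \<inter> {int (Suc n), - int (Suc n)} = {}" using SL_abs by fastforce
  qed simp
  also have "\<dots> = (\<Sum>k\<le>n. \<Sum>\<sigma>\<in>SL n. \<Sum>v\<in>{int (Suc n), - int (Suc n)}. f (take k \<sigma> @ v # drop k \<sigma>))"
    by (rule sum.swap)
  also have "\<dots> = (\<Sum>k\<le>n. \<Sum>\<sigma>\<in>SL n. \<Sum>v\<in>{int (Suc n), - int (Suc n)}. f (take k (psi k \<sigma>) @ v # drop k (psi k \<sigma>)))"
  proof (rule sum.cong[OF refl])
    fix k assume k: "k \<in> {..n}"
    show "(\<Sum>\<sigma>\<in>SL n. \<Sum>v\<in>{int (Suc n), - int (Suc n)}. f (take k \<sigma> @ v # drop k \<sigma>)) =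
      (\<Sum>\<sigma>\<in>SL n. \<Sum>v\<in>{int (Suc n), - int (Suc n)}. f (take k (psi k \<sigma>) @ v # drop k (psi k \<sigma>)))"
      by (rule sum_invol[of "SL n" "psi k" "\<lambda>\<sigma>. \<Sum>v\<in>{int (Suc n), - int (Suc n)}. f (take k \<sigma> @ v # drop k \<sigma>)"])
        (auto simp: SL_fin psi_props)
  qed
  also have "\<dots> = (\<Sum>k\<le>n. \<Sum>\<sigma>\<in>SL n. \<Sum>v\<in>{int (Suc n), - int (Suc n)}. f (take k \<sigma> @ v # map uminus (drop k \<sigma>)))"
  proof (rule sum.cong[OF refl], rule sum.cong[OF refl])
    fix k \<sigma> assume k: "k \<in> {..n}" and s: "\<sigma> \<in> SL n"
    then have kl: "k \<le> length \<sigma>" using SL_len by auto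
    show "(\<Sum>v\<in>{int (Suc n), - int (Suc n)}. f (take k (psi k \<sigma>) @ v # drop k (psi k \<sigma>))) =
      (\<Sum>v\<in>{int (Suc n), - int (Suc n)}. f (take k \<sigma> @ v # map uminus (drop k \<sigma>)))"
      using kl by (simp add: psi_def)
  qed
  also have "\<dots> = (\<Sum>\<sigma>\<in>SL n. \<Sum>k\<le>n. \<Sum>v\<in>{int (Suc n), - int (Suc n)}. f (take k \<sigma> @ v # map uminus (drop k \<sigma>)))"
    by (rule sum.swap)
  finally show ?thesis .
qed




lemma ad_ins_B:
  assumes w: "w \<in> SL n" and k: "k < n" and v: "v = int (Suc n) \<or> v = - int (Suc n)"
  shows "ad 1 (0 # take k w @ v # map uminus (drop k w)) =
     ad 1 (0 # take k w) + ad (Suc k + 1) (drop k w)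
      + (if v = int (Suc n) then (if even k then 2 else 0) else (if even k then 0 else 2))"
proof -
  have len: "length w = n" using SL_len[OF w] .
  have dw: "distinct w" using SL_distinct[OF w] .
  define xs where "xs = 0 # take k w"
  have xsl: "length xs = Suc k" using len k unfolding xs_def by simp
  have lastx: "\<bar>last xs\<bar> \<le> int n"
  proof (cases "take k w = []")
    case True then show ?thesis unfolding xs_def by simp
  next
    case False
    then have "last (take k w) \<in> set w" by (meson in_set_takeD last_in_set)
    then show ?thesis unfolding xs_def using SL_abs[OF w] False by simp
  qed
  obtain y ys where dy: "drop k w = y # ys" using k len by (cases "drop k w") auto
  have "y \<in> set w" using dy by (metis in_set_dropD list.set_intros(1))
  then have ya: "\<bar>y\<bar> \<le> int n" using SL_abs[OF w] by simp
  have dd: "distinct (drop k w)" using dw by simp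
  have anti: "\<forall>a\<in>set (drop k w). \<forall>b\<in>set (drop k w). a < b \<longrightarrow> - b < - a" by simp
  have am: "ad (Suc q) (map uminus (drop k w)) = ad q (drop k w)" for q
    using ad_map_anti[OF anti dd] .
  have "ad 1 (0 # take k w @ v # map uminus (drop k w)) = ad 1 (xs @ v # map uminus (drop k w))"
    unfolding xs_def by simp
  also have "\<dots> = ad 1 xs + (if (last xs > v) = even (1 + length xs - 1) then 1 else 0) + ad (1 + length xs) (v # map uminus (drop k w))"
    by (rule ad_append) (simp add: xs_def)
  also have "ad (1 + length xs) (v # map uminus (drop k w)) = (if (v > - y) = even (Suc (Suc k)) then 1 else 0) + ad (Suc (Suc (Suc k))) (map uminus (drop k w))"
    unfolding xsl dy by (simp add: ad_Cons2)
  also have "ad (Suc (Suc (Suc k))) (map uminus (drop k w)) = ad (Suc k + 1) (drop k w)" using am by simp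
  finally have fin: "ad 1 (0 # take k w @ v # map uminus (drop k w)) = ad 1 xs + (if (last xs > v) = even (1 + length xs - 1) then 1 else 0)
     + ((if (v > - y) = even (Suc (Suc k)) then 1 else 0) + ad (Suc k + 1) (drop k w))" .
  have "(if (last xs > v) = even (1 + length xs - 1) then 1 else 0)
     + ((if (v > - y) = even (Suc (Suc k)) then 1 else 0) + ad (Suc k + 1) (drop k w)) =
     ad (Suc k + 1) (drop k w) + (if v = int (Suc n) then (if even k then 2 else 0) else (if even k then 0 else 2))"
    using v lastx ya xsl by auto
  then show ?thesis using fin unfolding xs_def by simp
qed

lemma L101: "q + pX * (pX * q) = pCons 1 pX * q" "pX * (pX * q) + q = pCons 1 pX * q"
  by simp_all

lemma SB:
  assumes w: "w \<in> SL n"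
  shows "(\<Sum>k\<le>n. \<Sum>v\<in>{int (Suc n), - int (Suc n)}. pX ^ ad 1 (0 # take k w @ v # map uminus (drop k w)))
     = [:1,1:] * pX ^ ad 1 (0 # w) + [:1,0,1:] * ((1 - pX) * pderiv (pX ^ ad 1 (0 # w)) + smult (real n) (pX ^ ad 1 (0 # w)))"
proof -
  have len: "length w = n" using SL_len[OF w] .
  define D where "D = ad 1 (0 # w)"
  define g where "g k = (\<Sum>v\<in>{int (Suc n), - int (Suc n)}. pX ^ ad 1 (0 # take k w @ v # map uminus (drop k w)))" for k
  have gs: "g k = pX ^ ad 1 (0 # take k w @ int (Suc n) # map uminus (drop k w)) + pX ^ ad 1 (0 # take k w @ - int (Suc n) # map uminus (drop k w))" for k
    unfolding g_def by (subst sum.insert) auto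
  have gn: "g n = [:1,1:] * pX ^ D"
  proof -
    have lastx: "\<bar>last (0 # w)\<bar> \<le> int n"
    proof (cases "w = []")
      case False then show ?thesis using SL_abs[OF w] by simp
    qed simp
    have "ad 1 ((0 # w) @ [v]) = D + (if (last (0 # w) > v) = even (1 + n) then 1 else 0)" for v
      using ad_append[of "0 # w" 1 v "[]"] len unfolding D_def by simp
    then have "ad 1 (0 # w @ [v]) = D + (if (last (0 # w) > v) = even (1 + n) then 1 else 0)" for v by simp
    then show ?thesis unfolding gs using len lastx by (auto simp: power_add pX_lits algebra_simps)
  qed
  have gk: "g k = [:1,0,1:] * pX ^ (D - st 1 (0 # w) k)" if "k < n" for k
  proof -
    have sp: "D = ad 1 (take (Suc k) (0 # w)) + st 1 (0 # w) k + ad (1 + Suc k) (drop (Suc k) (0 # w))"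
      unfolding D_def using ad_split[of "Suc k" "0 # w" 1] that len by simp
    have e: "D - st 1 (0 # w) k = ad 1 (0 # take k w) + ad (Suc k + 1) (drop k w)" using sp by simp
    have b1: "ad 1 (0 # take k w @ int (Suc n) # map uminus (drop k w)) = ad 1 (0 # take k w) + ad (Suc k + 1) (drop k w) + (if even k then 2 else 0)"
      using ad_ins_B[OF w that, of "int (Suc n)"] by simp
    have b2: "ad 1 (0 # take k w @ - int (Suc n) # map uminus (drop k w)) = ad 1 (0 # take k w) + ad (Suc k + 1) (drop k w) + (if even k then 0 else 2)"
      using ad_ins_B[OF w that, of "- int (Suc n)"] by simp
    show ?thesis unfolding gs b1 b2 e
      by (cases "even k") (auto simp: power_add pX_lits algebra_simps power2_eq_square L101 simp del: mult_pCons_left)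
  qed
  have sa: "sum (st 1 (0 # w)) {..<n} = D" unfolding D_def ad_def using len by simp
  have c: "(\<Sum>j<n. pX ^ (D - st 1 (0 # w) j)) = (1 - pX) * pderiv (pX ^ D) + smult (real n) (pX ^ D)"
    using count01[of n "st 1 (0 # w)"] sa by (simp add: st_def)
  have "(\<Sum>k\<le>n. g k) = (\<Sum>k<n. g k) + g n" by (simp add: lessThan_Suc_atMost[symmetric])
  also have "(\<Sum>k<n. g k) = [:1,0,1:] * (\<Sum>j<n. pX ^ (D - st 1 (0 # w) j))"
    by (simp add: gk sum_distrib_left del: mult_pCons_left)
  finally have "(\<Sum>k\<le>n. g k) = [:1,0,1:] * ((1 - pX) * pderiv (pX ^ D) + smult (real n) (pX ^ D)) + [:1,1:] * pX ^ D"
    unfolding c gn .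
  then show ?thesis unfolding g_def D_def by (simp only: add.commute)
qed

lemma Bp_rec:
  "Bp (Suc n) = [:1,1:] * Bp n + [:1,0,1:] * ((1 - pX) * pderiv (Bp n) + smult (real n) (Bp n))"
proof -
  have "Bp (Suc n) = (\<Sum>w\<in>SL n. [:1,1:] * pX ^ ad 1 (0 # w) + [:1,0,1:] * ((1 - pX) * pderiv (pX ^ ad 1 (0 # w)) + smult (real n) (pX ^ ad 1 (0 # w))))"
    unfolding Bp_def SL_dec_flip by (rule sum.cong[OF refl], rule SB)
  also have "\<dots> = [:1,1:] * Bp n + [:1,0,1:] * ((1 - pX) * pderiv (Bp n) + smult (real n) (Bp n))"
    unfolding Bp_def by (simp add: sum.distrib sum_distrib_left distrib_left pderiv_sum' smult_sum' del: mult_pCons_left)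
  finally show ?thesis .
qed




lemma alg_A:
  fixes x t s u T a b P Q W m A1 :: real
  assumes "t = 1 - x" "s = 1 + x^2" "u*t = 1 + x" "W*s*a = t^2*T*P"
    "W*(2*x*a + s*b) = -(m+2)*t*T*P + 2*T*Q" "2*A1 = (2+2*x)*a + s*(t*b + m*a)"
  shows "2*W*s*A1 = t^3*T*((1+u^2)*Q)"
  using assms by algebra

lemma alg_B:
  fixes x t s u T a b P Q B1 n :: real
  assumes "t = 1 - x" "s = 1 + x^2" "u*t = 1 + x" "a = t^2*T*P"
    "b = -n*t*T*P + 2*T*Q" "B1 = (1+x)*a + s*(t*b + n*a)"
  shows "B1 = t^3*T*(u*P + (1+u^2)*Q)"
  using assms by algebra

lemma g_deriv:
  assumes x: "x \<noteq> (1::real)"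
  shows "((\<lambda>y. (1-y)^k * poly p ((1+y)/(1-y))) has_real_derivative
      (-(real k) * (1-x) * ((1-x)^k/(1-x)^2) * poly p ((1+x)/(1-x)) + 2 * ((1-x)^k/(1-x)^2) * poly (pderiv p) ((1+x)/(1-x)))) (at x)"
proof -
  have t: "1 - x \<noteq> 0" using x by simp
  have d: "((\<lambda>y. (1-y)^k * poly p ((1+y)/(1-y))) has_real_derivative
      (real k * (1-x)^(k-1) * (-1) * poly p ((1+x)/(1-x)) + (1-x)^k * ((((1-x) + (1+x)) / (1-x)^2) * poly (pderiv p) ((1+x)/(1-x))))) (at x)"
    using t by (auto intro!: derivative_eq_intros simp: power2_eq_square field_simps)
  have e1: "real k * (1-x)^(k-1) * (-1) = -(real k) * (1-x) * ((1-x)^k/(1-x)^2)"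
  proof (cases k)
    case (Suc j)
    have "(1-x) * ((1-x)^Suc j/(1-x)^2) = (1-x)^j" using t by (simp add: power2_eq_square)
    then show ?thesis using Suc by (metis (no_types, lifting) diff_Suc_1 mult.assoc mult_minus_left mult_minus1_right)
  qed simp
  have e2: "(1-x)^k * ((((1-x) + (1+x)) / (1-x)^2)) = 2 * ((1-x)^k/(1-x)^2)" by simp
  show ?thesis using d unfolding e1 mult.assoc[symmetric] e2 by (simp add: mult.assoc)
qed

lemma transfer:
  assumes "\<forall>y. y \<noteq> 1 \<longrightarrow> poly q y = G y" "(G has_real_derivative G') (at x)" "x \<noteq> (1::real)"
  shows "poly (pderiv q) x = G'"
proof -
  have "(G has_real_derivative poly (pderiv q) x) (at x)"
    by (rule has_field_derivative_transform_within_open[OF poly_DERIV[of q x], of "-{1}"]) (use assms in auto)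
  then show ?thesis using assms(2) by (rule DERIV_unique)
qed




lemma LA_1: "LA 1 = {[1]}"
proof
  show "LA 1 \<subseteq> {[1]}"
  proof
    fix w assume w: "w \<in> LA 1"
    have "length w = 1" using LA_len[OF w] .
    then obtain b where "w = [b]" by (metis One_nat_def length_0_conv length_Suc_conv)
    then show "w \<in> {[1]}" using w by (auto dest: permutations_of_setD)
  qed
  show "{[1]} \<subseteq> LA 1" by (auto intro: permutations_of_setI)
qed

lemma Ap_1: "Ap 1 = 1"
  unfolding Ap_def LA_1 by simp

lemma SL_0: "SL 0 = {[]}"
  unfolding SL_def by auto

lemma Bp_0: "Bp 0 = 1"
  unfolding Bp_def SL_0 by simp

lemma poly_101: "poly [:1,0,1:] (y::real) = 1 + y^2" by (simp add: power2_eq_square algebra_simps)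

lemma A_main: "\<forall>x. x \<noteq> 1 \<longrightarrow> 2^(Suc m) * (1 + x^2) * poly (Ap (Suc m)) x = (1-x)^(Suc m + 1) * poly (P_hoff (Suc m)) ((1+x)/(1-x))"
proof (induction m)
  case 0
  show ?case
  proof (intro allI impI)
    fix x :: real assume x: "x \<noteq> 1"
    then have t: "1 - x \<noteq> 0" by simp
    have "(1-x)^2 * (1 + ((1+x)/(1-x))^2) = 2 * (1 + x^2)"
    proof -
      have "(1-x)^2*((1+x)/(1-x))^2 = (1+x)^2" using t by (simp add: power_divide)
      then show ?thesis by (simp add: distrib_left power2_eq_square algebra_simps)
    qed
    then show "2^(Suc 0) * (1 + x^2) * poly (Ap (Suc 0)) x = (1-x)^(Suc 0 + 1) * poly (P_hoff (Suc 0)) ((1+x)/(1-x))"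
      using Ap_1 by (simp add: pderiv_pCons power2_eq_square)
  qed
next
  case (Suc m)
  define n where "n = Suc m"
  show ?case
  proof (intro allI impI)
    fix x :: real assume x: "x \<noteq> 1"
    then have t: "1 - x \<noteq> 0" by simp
    define q where "q = smult (2^n) ([:1,0,1:] * Ap n)"
    define u where "u = (1+x)/(1-x)"
    define T where "T = (1-x)^(n+1)/(1-x)^2"
    define a where "a = poly (Ap n) x"
    define b where "b = poly (pderiv (Ap n)) x"
    define P where "P = poly (P_hoff n) u"
    define Q where "Q = poly (pderiv (P_hoff n)) u"
    define A1 where "A1 = poly (Ap (Suc n)) x"
    have IH: "\<forall>y. y \<noteq> 1 \<longrightarrow> poly q y = (1-y)^(n+1) * poly (P_hoff n) ((1+y)/(1-y))"
    proof (intro allI impI)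
      fix y :: real assume y: "y \<noteq> 1"
      have "poly q y = 2^n * (1 + y^2) * poly (Ap n) y" unfolding q_def by (simp add: poly_101 power2_eq_square algebra_simps)
      also have "\<dots> = (1-y)^(n+1) * poly (P_hoff n) ((1+y)/(1-y))"
        using Suc.IH y unfolding n_def by blast
      finally show "poly q y = (1-y)^(n+1) * poly (P_hoff n) ((1+y)/(1-y))" .
    qed
    have E2': "poly (pderiv q) x = -(real (n+1)) * (1-x) * T * P + 2 * T * Q"
      using transfer[OF IH g_deriv[OF x, of "n+1" "P_hoff n"] x] unfolding T_def P_def Q_def u_def by simp
    have pq: "poly (pderiv q) x = 2^n * (2*x*a + (1+x^2)*b)"
      unfolding q_def a_def b_def by (simp add: pderiv_smult pderiv_add pderiv_pCons poly_101 algebra_simps power2_eq_square)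
    have qa: "poly q x = 2^n*(1+x^2)*a" unfolding q_def a_def by (simp add: poly_101 power2_eq_square algebra_simps)
    have tT: "(1-x)^2 * T = (1-x)^(n+1)" unfolding T_def using t by simp
    have E1: "2^n * (1+x^2) * a = (1-x)^2 * T * P"
    proof -
      have "2^n*(1+x^2)*a = poly q x" using qa by simp
      also have "\<dots> = (1-x)^(n+1) * P" using IH x unfolding P_def u_def by simp
      also have "\<dots> = (1-x)^2*T*P" using tT by simp
      finally show ?thesis .
    qed
    have R: "2 * A1 = (2+2*x)*a + (1+x^2)*((1-x)*b + real m * a)"
      using arg_cong[OF Ap_rec[of m], of "\<lambda>p. poly p x"] unfolding A1_def a_def b_def n_def
      by (simp add: poly_101 algebra_simps power2_eq_square)
    have main: "2 * 2^n * (1+x^2) * A1 = (1-x)^3 * T * ((1+u^2)*Q)"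
    proof (rule alg_A[where m="real m"])
      show "u * (1-x) = 1 + x" unfolding u_def using t by simp
      show "2^n * (1+x^2) * a = (1-x)^2 * T * P" by (rule E1)
      show "2^n * (2*x*a + (1+x^2)*b) = -(real m + 2) * (1-x) * T * P + 2 * T * Q"
        using E2' pq unfolding n_def by simp
      show "2 * A1 = (2+2*x)*a + (1+x^2)*((1-x)*b + real m * a)" by (rule R)
    qed auto
    have tp: "(1-x)^(Suc n + 1) = (1-x)^3 * T"
    proof -
      have "(1-x)^3 * T = (1-x) * ((1-x)^2 * T)" by (simp add: power3_eq_cube power2_eq_square)
      also have "\<dots> = (1-x)^(Suc n + 1)" unfolding tT by simp
      finally show ?thesis by simp
    qed
    have ph: "poly (P_hoff (Suc n)) u = (1+u^2) * Q" unfolding Q_def by (simp add: poly_101 power2_eq_square algebra_simps)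
    show "2^(Suc (Suc m)) * (1 + x^2) * poly (Ap (Suc (Suc m))) x = (1-x)^(Suc (Suc m) + 1) * poly (P_hoff (Suc (Suc m))) ((1+x)/(1-x))"
      using main tp ph unfolding A1_def u_def n_def by (simp add: mult.assoc)
  qed
qed

lemma B_main: "\<forall>x. x \<noteq> 1 \<longrightarrow> poly (Bp n) x = (1-x)^n * poly (Q_hoff n) ((1+x)/(1-x))"
proof (induction n)
  case 0
  show ?case using Bp_0 by simp
next
  case (Suc n)
  show ?case
  proof (intro allI impI)
    fix x :: real assume x: "x \<noteq> 1"
    then have t: "1 - x \<noteq> 0" by simp
    define u where "u = (1+x)/(1-x)"
    define T where "T = (1-x)^n/(1-x)^2"
    define a where "a = poly (Bp n) x"
    define b where "b = poly (pderiv (Bp n)) x"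
    define P where "P = poly (Q_hoff n) u"
    define Q where "Q = poly (pderiv (Q_hoff n)) u"
    define B1 where "B1 = poly (Bp (Suc n)) x"
    have tT: "(1-x)^2 * T = (1-x)^n" unfolding T_def using t by simp
    have E2: "b = -(real n) * (1-x) * T * P + 2 * T * Q"
      using transfer[OF Suc.IH g_deriv[OF x, of n "Q_hoff n"] x] unfolding b_def T_def P_def Q_def u_def by simp
    have E1: "a = (1-x)^2 * T * P"
    proof -
      have "a = (1-x)^n * P" using Suc.IH x unfolding a_def P_def u_def by simp
      also have "\<dots> = (1-x)^2*T*P" using tT by simp
      finally show ?thesis .
    qed
    have R: "B1 = (1+x)*a + (1+x^2)*((1-x)*b + real n * a)"
      using arg_cong[OF Bp_rec[of n], of "\<lambda>p. poly p x"] unfolding B1_def a_def b_def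
      by (simp add: poly_101 algebra_simps power2_eq_square)
    have main: "B1 = (1-x)^3 * T * (u*P + (1+u^2)*Q)"
    proof (rule alg_B[where n="real n"])
      show "u * (1-x) = 1 + x" unfolding u_def using t by simp
    qed (use E1 E2 R in auto)
    have tp: "(1-x)^(Suc n) = (1-x)^3 * T"
    proof -
      have "(1-x)^3 * T = (1-x) * ((1-x)^2 * T)" by (simp add: power3_eq_cube power2_eq_square)
      also have "\<dots> = (1-x)^(Suc n)" unfolding tT by simp
      finally show ?thesis by simp
    qed
    have ph: "poly (Q_hoff (Suc n)) u = u*P + (1+u^2) * Q" unfolding P_def Q_def
      by (simp add: poly_101 power2_eq_square algebra_simps)
    show "poly (Bp (Suc n)) x = (1-x)^(Suc n) * poly (Q_hoff (Suc n)) ((1+x)/(1-x))"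
      using main tp ph unfolding B1_def u_def by (simp add: mult.assoc)
  qed
qed




lemma card_filter_sum: "finite A \<Longrightarrow> card {i\<in>A. P i} = (\<Sum>i\<in>A. if P i then 1 else 0)"
  by (simp add: sum.inter_filter[symmetric])

lemma sum_shift1: "(\<Sum>i\<in>{1..<n}. f i) = (\<Sum>j<n-1. f (Suc j))"
proof (cases n)
  case (Suc m)
  have "(\<Sum>i\<in>{Suc 0..<Suc m}. f i) = (\<Sum>j\<in>{0..<m}. f (Suc j))" by (rule sum.shift_bounds_Suc_ivl)
  then show ?thesis using Suc by (simp add: atLeast0LessThan)
qed simp

lemma altdes_ad:
  assumes p: "\<sigma> permutes {1..n}"
  shows "alt_des n \<sigma> = ad 0 (map \<sigma> [1..<n+1])"
proof -
  define w where "w = map \<sigma> [1..<n+1]"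
  have len: "length w = n" unfolding w_def by simp
  have wn: "w!j = \<sigma> (Suc j)" if "j < n" for j unfolding w_def using that by (simp del: upt_Suc)
  have inj: "inj \<sigma>" using p by (rule permutes_inj)
  define C where "C i = ((\<sigma> i > \<sigma> (Suc i) \<and> odd i) \<or> (\<sigma> i < \<sigma> (Suc i) \<and> even i))" for i
  have "alt_des n \<sigma> = card {i \<in> {1..<n}. C i}" unfolding alt_des_def C_def by simp
  also have "\<dots> = (\<Sum>i\<in>{1..<n}. if C i then 1 else 0)" by (rule card_filter_sum) simp
  also have "\<dots> = (\<Sum>j<n-1. if C (Suc j) then 1 else 0)" by (rule sum_shift1)
  also have "\<dots> = (\<Sum>j<n-1. st 0 w j)"
  proof (rule sum.cong[OF refl])
    fix j assume j: "j \<in> {..<n-1}"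
    have ne: "\<sigma> (Suc j) \<noteq> \<sigma> (Suc (Suc j))" using inj by (simp add: inj_eq)
    have "w!j = \<sigma> (Suc j)" "w!Suc j = \<sigma> (Suc (Suc j))" using j wn by auto
    then show "(if C (Suc j) then 1 else 0) = st 0 w j"
      unfolding C_def st_def using ne by (auto simp: linorder_neq_iff)
  qed
  also have "\<dots> = ad 0 w" unfolding ad_def len ..
  finally show ?thesis unfolding w_def .
qed

definition toperm :: "nat \<Rightarrow> nat list \<Rightarrow> nat \<Rightarrow> nat" where
  "toperm n w = (\<lambda>i. if i \<in> {1..n} then w!(i-1) else i)"

lemma A_hat_Ap: "A_hat n x = poly (Ap n) x"
proof -
  have "poly (Ap n) x = (\<Sum>w\<in>LA n. x ^ ad 0 w)" unfolding Ap_def by (simp add: poly_sum)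
  also have "\<dots> = A_hat n x" unfolding A_hat_def
  proof (rule sum.reindex_bij_witness[where i="toperm n" and j="\<lambda>\<sigma>. map \<sigma> [1..<n+1]", symmetric])
    fix \<sigma> assume "\<sigma> \<in> {\<sigma>. \<sigma> permutes {1..n}}"
    then have p: "\<sigma> permutes {1..n}" by simp
    show "toperm n (map \<sigma> [1..<n+1]) = \<sigma>"
    proof
      fix i show "toperm n (map \<sigma> [1..<n+1]) i = \<sigma> i"
        unfolding toperm_def using permutes_not_in[OF p, of i] by (auto simp: nth_map simp del: upt_Suc)
    qed
    have "distinct (map \<sigma> [1..<n+1])" using permutes_inj_on[OF p]
      by (simp add: distinct_map atLeastLessThanSuc_atLeastAtMost del: upt_Suc)
    moreover have "set (map \<sigma> [1..<n+1]) = {1..n}"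
      using permutes_image[OF p] by (simp add: atLeastLessThanSuc_atLeastAtMost del: upt_Suc)
    ultimately show "map \<sigma> [1..<n+1] \<in> LA n" by (blast intro: permutations_of_setI)
    show "x ^ ad 0 (map \<sigma> [1..<n+1]) = x ^ alt_des n \<sigma>" using altdes_ad[OF p] by simp
  next
    fix w assume w: "w \<in> LA n"
    have len: "length w = n" using LA_len[OF w] .
    have d: "distinct w" "set w = {1..n}" using w by (auto dest: permutations_of_setD)
    show "map (toperm n w) [1..<n+1] = w"
      by (rule nth_equalityI) (auto simp: len toperm_def simp del: upt_Suc)
    have inj: "inj_on (toperm n w) {1..n}"
    proof (rule inj_onI)
      fix i j assume ij: "i \<in> {1..n}" "j \<in> {1..n}" "toperm n w i = toperm n w j"
      then have "w!(i-1) = w!(j-1)" unfolding toperm_def by simp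
      then have "i - 1 = j - 1" using d(1) ij len nth_eq_iff_index_eq[of w "i-1" "j-1"] by auto
      then show "i = j" using ij by (simp add: atLeastAtMost_iff) arith
    qed
    have img: "toperm n w ` {1..n} = {1..n}"
    proof -
      have "toperm n w ` {1..n} \<subseteq> {1..n}"
      proof
        fix y assume "y \<in> toperm n w ` {1..n}"
        then obtain i where i: "i \<in> {1..n}" "y = w!(i-1)" unfolding toperm_def by auto
        then have "w!(i-1) \<in> set w" using len by auto
        then show "y \<in> {1..n}" using i d(2) by simp
      qed
      then show ?thesis using endo_inj_surj[OF _ _ inj] by simp
    qed
    have bij: "bij_betw (toperm n w) {1..n} {1..n}" using inj img by (simp add: bij_betw_def)
    have out: "toperm n w i = i" if "i \<notin> {1..n}" for i using that by (auto simp: toperm_def)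
    have "toperm n w permutes {1..n}" by (rule bij_imp_permutes[OF bij]) (use out in auto)
    then show "toperm n w \<in> {\<sigma>. \<sigma> permutes {1..n}}" by simp
  qed
  finally show ?thesis ..
qed




definition tolistB :: "nat \<Rightarrow> (int \<Rightarrow> int) \<Rightarrow> int list" where
  "tolistB n \<pi> = map (\<lambda>j. \<pi> (int j)) [1..<n+1]"

definition topermB :: "nat \<Rightarrow> int list \<Rightarrow> int \<Rightarrow> int" where
  "topermB n w i = (if 1 \<le> i \<and> i \<le> int n then w!(nat i - 1)
     else if - int n \<le> i \<and> i \<le> -1 then - (w!(nat (-i) - 1)) else i)"

lemma sp_facts:
  assumes "\<pi> \<in> signed_perms n"
  shows "\<pi> permutes ({- int n..int n} - {0})" "\<pi> (- i) = - \<pi> i" "\<pi> 0 = 0" "inj \<pi>"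
proof -
  show p: "\<pi> permutes ({- int n..int n} - {0})" using assms unfolding signed_perms_def by simp
  show "\<pi> (- i) = - \<pi> i" for i using assms unfolding signed_perms_def by simp
  then have "\<pi> (- 0) = - \<pi> 0" .
  then show "\<pi> 0 = 0" by simp
  show "inj \<pi>" using p by (rule permutes_inj)
qed

lemma tolistB_nth: "j < n \<Longrightarrow> tolistB n \<pi> ! j = \<pi> (int j + 1)"
  unfolding tolistB_def by (simp add: add.commute del: upt_Suc)

lemma tolistB_len: "length (tolistB n \<pi>) = n"
  unfolding tolistB_def by simp

lemma tolistB_in:
  assumes s: "\<pi> \<in> signed_perms n"
  shows "tolistB n \<pi> \<in> SL n"
proof -
  note F = sp_facts[OF s]
  have inS: "\<pi> (int j) \<in> {- int n..int n} - {0}" if "j \<in> {1..n}" for j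
    using permutes_in_image[OF F(1)] that by auto
  have absr: "\<bar>\<pi> (int j)\<bar> \<in> {1..int n}" if "j \<in> {1..n}" for j using inS[OF that] by auto
  have inj: "inj_on (\<lambda>j. \<bar>\<pi> (int j)\<bar>) {1..n}"
  proof (rule inj_onI)
    fix j k assume jk: "j \<in> {1..n}" "k \<in> {1..n}" "\<bar>\<pi> (int j)\<bar> = \<bar>\<pi> (int k)\<bar>"
    then have "\<pi> (int j) = \<pi> (int k) \<or> \<pi> (int j) = - \<pi> (int k)" by (auto simp: abs_if split: if_splits)
    then have "\<pi> (int j) = \<pi> (int k) \<or> \<pi> (int j) = \<pi> (- int k)" using F(2)[of "int k"] by simp
    then have "int j = int k \<or> int j = - int k" using F(4) by (auto simp: inj_eq)
    then show "j = k" using jk by auto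
  qed
  have ml: "map abs (tolistB n \<pi>) = map (\<lambda>j. \<bar>\<pi> (int j)\<bar>) [1..<n+1]" unfolding tolistB_def by simp
  have d: "distinct (map abs (tolistB n \<pi>))" unfolding ml
    using inj by (simp add: distinct_map atLeastLessThanSuc_atLeastAtMost del: upt_Suc)
  have sub: "set (map abs (tolistB n \<pi>)) \<subseteq> {1..int n}" unfolding ml
    using absr by (auto simp: atLeastLessThanSuc_atLeastAtMost simp del: upt_Suc)
  have "card (set (map abs (tolistB n \<pi>))) = n" using distinct_card[OF d] by (simp add: tolistB_len)
  then have "set (map abs (tolistB n \<pi>)) = {1..int n}"
    using sub by (intro card_subset_eq) auto
  then show ?thesis using d unfolding SL_def by simp
qed

lemma topermB_tolistB:
  assumes s: "\<pi> \<in> signed_perms n"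
  shows "topermB n (tolistB n \<pi>) = \<pi>"
proof
  fix i
  note F = sp_facts[OF s]
  show "topermB n (tolistB n \<pi>) i = \<pi> i"
  proof (cases "1 \<le> i \<and> i \<le> int n")
    case True
    then have "nat i - 1 < n" by linarith
    moreover have e: "int (nat i - 1) + 1 = i" using True by arith
    ultimately show ?thesis using True by (simp add: topermB_def tolistB_nth)
  next
    case c1: False
    show ?thesis
    proof (cases "- int n \<le> i \<and> i \<le> -1")
      case True
      then have "nat (-i) - 1 < n" by linarith
      moreover have "int (nat (-i) - 1) + 1 = -i" using True by arith
      ultimately have "tolistB n \<pi> ! (nat (-i) - 1) = \<pi> (- i)" using True by (simp add: tolistB_nth)
      then show ?thesis using True c1 F(2)[of i] by (simp add: topermB_def)
    next
      case False
      then have "i \<notin> {- int n..int n} - {0}" using c1 by auto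
      then have "\<pi> i = i" using permutes_not_in[OF F(1)] by blast
      moreover have "topermB n (tolistB n \<pi>) i = i" using c1 False unfolding topermB_def by auto
      ultimately show ?thesis by simp
    qed
  qed
qed

lemma tolistB_topermB:
  assumes w: "w \<in> SL n"
  shows "tolistB n (topermB n w) = w"
proof (rule nth_equalityI)
  show "length (tolistB n (topermB n w)) = length w" using SL_len[OF w] by (simp add: tolistB_len)
  fix i assume "i < length (tolistB n (topermB n w))"
  then have i: "i < n" by (simp add: tolistB_len)
  have e: "nat (int i + 1) - 1 = i" by arith
  show "tolistB n (topermB n w) ! i = w ! i" using i e by (simp add: tolistB_nth topermB_def)
qed

lemma topermB_in:
  assumes w: "w \<in> SL n"
  shows "topermB n w \<in> signed_perms n"
proof -
  have len: "length w = n" using SL_len[OF w] .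
  have da: "distinct (map abs w)" using w unfolding SL_def by simp
  have ab: "1 \<le> \<bar>w!k\<bar> \<and> \<bar>w!k\<bar> \<le> int n" if "k < n" for k using SL_abs[OF w, of "w!k"] that len by simp
  define S where "S = {- int n..int n} - {0}"
  have odd: "topermB n w (- i) = - topermB n w i" for i
    unfolding topermB_def by auto
  have into: "topermB n w i \<in> S" if "i \<in> S" for i
  proof (cases "1 \<le> i")
    case True
    then have "nat i - 1 < n" using that unfolding S_def by auto
    then show ?thesis using ab[of "nat i - 1"] True that unfolding S_def topermB_def by (auto simp: abs_le_iff)
  next
    case False
    then have "nat (-i) - 1 < n" using that unfolding S_def by auto
    then show ?thesis using ab[of "nat (-i) - 1"] False that unfolding S_def topermB_def by (auto simp: abs_le_iff)
  qed
  have wk: "w!k = w!l" if "\<bar>w!k\<bar> = \<bar>w!l\<bar>" "k < n" "l < n" for k l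
  proof -
    have "map abs w ! k = map abs w ! l" using that len by simp
    then have "k = l" using da that len nth_eq_iff_index_eq[of "map abs w" k l] by auto
    then show ?thesis by simp
  qed
  have inj: "inj_on (topermB n w) S"
  proof (rule inj_onI)
    fix i j assume ij: "i \<in> S" "j \<in> S" "topermB n w i = topermB n w j"
    define ki where "ki = (if 1 \<le> i then nat i - 1 else nat (-i) - 1)"
    define kj where "kj = (if 1 \<le> j then nat j - 1 else nat (-j) - 1)"
    have ki: "ki < n" "topermB n w i = (if 1 \<le> i then w!ki else - (w!ki))"
      using ij(1) unfolding ki_def S_def topermB_def by auto
    have kj: "kj < n" "topermB n w j = (if 1 \<le> j then w!kj else - (w!kj))"
      using ij(2) unfolding kj_def S_def topermB_def by auto
    have "\<bar>w!ki\<bar> = \<bar>w!kj\<bar>" using ij(3) ki kj by (auto split: if_splits)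
    then have e: "w!ki = w!kj" using wk ki kj by blast
    have "ki = kj" using e ki(1) kj(1) SL_distinct[OF w] len nth_eq_iff_index_eq by blast
    then have kk: "ki = kj" .
    have i0: "i \<noteq> 0" "j \<noteq> 0" using ij(1,2) unfolding S_def by auto
    consider (pp) "1 \<le> i" "1 \<le> j" | (pn) "1 \<le> i" "\<not> 1 \<le> j" | (np) "\<not> 1 \<le> i" "1 \<le> j" | (nn) "\<not> 1 \<le> i" "\<not> 1 \<le> j" by blast
    then show "i = j"
    proof cases
      case pp
      then have "nat i - 1 = nat j - 1" using kk unfolding ki_def kj_def by simp
      then show ?thesis using pp by arith
    next
      case pn
      then have "w!ki = - (w!kj)" using ij(3) ki(2) kj(2) by simp
      then have "w!ki = 0" using e by simp
      then show ?thesis using ab[OF ki(1)] by simp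
    next
      case np
      then have "- (w!ki) = w!kj" using ij(3) ki(2) kj(2) by simp
      then have "w!ki = 0" using e by simp
      then show ?thesis using ab[OF ki(1)] by simp
    next
      case nn
      then have "nat (-i) - 1 = nat (-j) - 1" using kk unfolding ki_def kj_def by simp
      then show ?thesis using nn i0 by arith
    qed
  qed
  have img: "topermB n w ` S = S"
  proof (rule endo_inj_surj)
    show "finite S" unfolding S_def by simp
    show "topermB n w ` S \<subseteq> S" using into by auto
    show "inj_on (topermB n w) S" by (rule inj)
  qed
  have bij: "bij_betw (topermB n w) S S" using inj img by (simp add: bij_betw_def)
  have out: "topermB n w i = i" if "i \<notin> S" for i using that unfolding S_def topermB_def by auto
  have "topermB n w permutes S" by (rule bij_imp_permutes[OF bij]) (use out in auto)
  then show ?thesis using odd unfolding signed_perms_def S_def by simp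
qed

lemma altdesB_ad:
  assumes s: "\<pi> \<in> signed_perms n"
  shows "alt_des_B n \<pi> = ad 1 (0 # tolistB n \<pi>)"
proof -
  note F = sp_facts[OF s]
  define L where "L = 0 # tolistB n \<pi>"
  have lenL: "length L = Suc n" unfolding L_def by (simp add: tolistB_len)
  have Ln: "L!j = \<pi> (int j)" if "j \<le> n" for j
  proof (cases j)
    case 0 then show ?thesis using F(3) unfolding L_def by simp
  next
    case (Suc k) then show ?thesis using that unfolding L_def by (simp add: tolistB_nth add.commute)
  qed
  define C where "C i = ((\<pi> i < \<pi> (i + 1) \<and> even i) \<or> (\<pi> i > \<pi> (i + 1) \<and> odd i))" for i
  have "alt_des_B n \<pi> = card {i \<in> {0..<int n}. C i}" unfolding alt_des_B_def C_def by simp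
  also have "\<dots> = (\<Sum>i\<in>{0..<int n}. if C i then 1 else 0)" by (rule card_filter_sum) simp
  also have "\<dots> = (\<Sum>i\<in>int ` {0..<n}. if C i then 1 else 0)" by (simp add: image_int_atLeastLessThan)
  also have "\<dots> = (\<Sum>j\<in>{0..<n}. if C (int j) then 1 else 0)" by (subst sum.reindex) (auto simp: inj_on_def)
  also have "\<dots> = (\<Sum>j<n. st 1 L j)"
  proof (rule sum.cong)
    show "{0..<n} = {..<n}" by auto
  next
    fix j assume j: "j \<in> {..<n}"
    have ne: "\<pi> (int j) \<noteq> \<pi> (int j + 1)" using F(4) by (simp add: inj_eq)
    have "L!j = \<pi> (int j)" "L!Suc j = \<pi> (int j + 1)" using j Ln[of j] Ln[of "Suc j"] by (auto simp: add.commute)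
    then show "(if C (int j) then 1 else 0) = st 1 L j"
      unfolding C_def st_def using ne by (auto simp: linorder_neq_iff)
  qed
  also have "\<dots> = ad 1 L" unfolding ad_def lenL by simp
  finally show ?thesis unfolding L_def .
qed

lemma B_hat_Bp: "B_hat n x = poly (Bp n) x"
proof -
  have "poly (Bp n) x = (\<Sum>w\<in>SL n. x ^ ad 1 (0 # w))" unfolding Bp_def by (simp add: poly_sum)
  also have "\<dots> = B_hat n x" unfolding B_hat_def
  proof (rule sum.reindex_bij_witness[where i="topermB n" and j="tolistB n", symmetric])
    fix \<pi> assume s: "\<pi> \<in> signed_perms n"
    show "topermB n (tolistB n \<pi>) = \<pi>" by (rule topermB_tolistB[OF s])
    show "tolistB n \<pi> \<in> SL n" by (rule tolistB_in[OF s])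
    show "x ^ ad 1 (0 # tolistB n \<pi>) = x ^ alt_des_B n \<pi>" using altdesB_ad[OF s] by simp
  next
    fix w assume w: "w \<in> SL n"
    show "tolistB n (topermB n w) = w" by (rule tolistB_topermB[OF w])
    show "topermB n w \<in> signed_perms n" by (rule topermB_in[OF w])
  qed
  finally show ?thesis ..
qed



theorem theorem1p2:
  fixes n :: nat and x :: real
  assumes "n \<ge> 1" and "x \<noteq> 1"
  shows "2 ^ n * (1 + x^2) * A_hat n x = (1 - x) ^ (n + 1) * poly (P_hoff n) ((1 + x) / (1 - x))
         \<and> B_hat n x = (1 - x) ^ n * poly (Q_hoff n) ((1 + x) / (1 - x))"
proof
  obtain m where m: "n = Suc m" using assms(1) by (cases n) auto
  show "2 ^ n * (1 + x^2) * A_hat n x = (1 - x) ^ (n + 1) * poly (P_hoff n) ((1 + x) / (1 - x))"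
    using A_main[of m] assms(2) unfolding m A_hat_Ap by blast
  show "B_hat n x = (1 - x) ^ n * poly (Q_hoff n) ((1 + x) / (1 - x))"
    using B_main[of n] assms(2) unfolding B_hat_Bp by blast
qed

end
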